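(* Let $s\ge 1$, $r\ge 2$ and $n_0,\dots,n_s\ge 1$ be integers such that $\sum_{i=0}^s n_i^{-\frac{1}{r-1}}\ge s^{\frac{r}{r-1}}$. For $0\le i\le s$ let $$p_i=1-\frac{s\,n_i^{-\frac{1}{r-1}}}{\sum_{j=0}^s n_j^{-\frac{1}{r-1}}}.$$ Then $0\le p_i\le 1$ for each $0\le i\le s$, $\sum_{i=0}^s p_i=1$, and $\sum_{i=0}^s n_i(1-p_i)^r\le 1$. *)

theory Defs
  imports Complex_Main
begin

end

theory Submission
  imports Defs
begin

theorem lemma5p2:
  fixes s r :: nat and n :: "nat \<Rightarrow> nat" and p :: "nat \<Rightarrow> real"
  assumes hs: "s \<ge> 1" and hr: "r \<ge> 2"
    and hn: "\<forall>i\<in>{0..s}. n i \<ge> 1"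
    and hsum: "(\<Sum>i=0..s. real (n i) powr (- 1 / (real r - 1))) \<ge> real s powr (real r / (real r - 1))"
    and hp: "\<forall>i\<in>{0..s}. p i = 1 - real s * real (n i) powr (- 1 / (real r - 1))
               / (\<Sum>j=0..s. real (n j) powr (- 1 / (real r - 1)))"
  shows "(\<forall>i\<in>{0..s}. 0 \<le> p i \<and> p i \<le> 1) \<and> (\<Sum>i=0..s. p i) = 1
         \<and> (\<Sum>i=0..s. real (n i) * (1 - p i) ^ r) \<le> 1"
proof -
  define e where "e = 1 / (real r - 1)"
  define a where "a i = real (n i) powr (- e)" for i
  define S where "S = (\<Sum>j=0..s. a j)"
  have e0: "e > 0" using hr by (simp add: e_def)
  have aeq: "real (n i) powr (- 1 / (real r - 1)) = a i" for i
    by (simp add: a_def e_def)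
  have hsum': "real s powr (real r / (real r - 1)) \<le> S"
    using hsum unfolding aeq S_def .
  have apos: "0 < a i" if "i \<in> {0..s}" for i
    using hn that by (auto simp: a_def intro: Suc_le_lessD)
  have ale: "a i \<le> 1" if "i \<in> {0..s}" for i
  proof -
    have "1 \<le> real (n i) powr e" using hn that e0 by (intro ge_one_powr_ge_zero) auto
    thus ?thesis unfolding a_def powr_minus using inverse_le_1_iff by force
  qed
  have rr: "real r / (real r - 1) \<ge> 1" using hr by (simp add: field_simps)
  have "real s = real s powr 1" using hs by simp
  also have "\<dots> \<le> real s powr (real r / (real r - 1))"
    using hs rr by (intro powr_mono) auto
  also have "\<dots> \<le> S" using hsum' .
  finally have sS: "real s \<le> S" .
  have Spos: "S > 0" using hs sS by simp
  have pe: "p i = 1 - real s * a i / S" if "i \<in> {0..s}" for i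
    using hp that unfolding aeq S_def by blast
  have P1: "\<forall>i\<in>{0..s}. 0 \<le> p i \<and> p i \<le> 1"
  proof
    fix i assume i: "i \<in> {0..s}"
    have "real s * a i \<le> real s * 1" using ale[OF i] by (intro mult_left_mono) auto
    also have "\<dots> \<le> S" using sS by simp
    finally have "real s * a i / S \<le> 1" using Spos by simp
    moreover have "0 \<le> real s * a i / S" using apos[OF i] Spos by simp
    ultimately show "0 \<le> p i \<and> p i \<le> 1" using pe[OF i] by simp
  qed
  have "(\<Sum>i=0..s. p i) = (\<Sum>i=0..s. 1 - real s / S * a i)"
    by (intro sum.cong) (auto simp: pe)
  also have "\<dots> = real (s+1) - real s / S * S"
    by (simp only: sum_subtractf sum_distrib_left[symmetric] S_def sum_constant card_atLeastAtMost)
  also have "\<dots> = 1" using Spos by simp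
  finally have P2: "(\<Sum>i=0..s. p i) = 1" .
  have na: "real (n i) * a i ^ r = a i" if "i \<in> {0..s}" for i
  proof -
    have np: "real (n i) > 0" using hn that by (auto intro: Suc_le_lessD)
    have "a i ^ r = real (n i) powr (- e * real r)"
    proof -
      have "a i ^ r = a i powr real r" using apos[OF that] by (simp add: powr_realpow)
      also have "\<dots> = real (n i) powr (- e * real r)" unfolding a_def by (simp add: powr_powr)
      finally show ?thesis .
    qed
    hence "real (n i) * a i ^ r = real (n i) powr (1 + (- e * real r))"
      using np by (simp add: powr_add powr_minus_divide powr_diff)
    also have "1 + (- e * real r) = - e" using hr by (simp add: e_def field_simps)
    finally show ?thesis by (simp add: a_def)
  qed
  have "(\<Sum>i=0..s. real (n i) * (1 - p i) ^ r) = (\<Sum>i=0..s. (real s / S) ^ r * (real (n i) * a i ^ r))"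
    by (intro sum.cong) (auto simp: pe power_mult_distrib power_divide)
  also have "\<dots> = (\<Sum>i=0..s. (real s / S) ^ r * a i)"
    by (intro sum.cong) (auto simp: na)
  also have "\<dots> = (real s / S) ^ r * S" by (simp add: sum_distrib_left S_def)
  also have "\<dots> = real s ^ r / S ^ (r - 1)"
  proof -
    have "S ^ r = S ^ (r-1) * S" using hr by (metis Suc_diff_1 less_le_trans pos2 power_Suc2)
    thus ?thesis using Spos by (simp add: power_divide)
  qed
  also have "\<dots> \<le> 1"
  proof -
    have "real s ^ r = (real s powr (real r / (real r - 1))) powr (real r - 1)"
      using hs hr by (simp add: powr_powr powr_realpow)
    also have "\<dots> \<le> S powr (real r - 1)"
      using hsum' hr by (intro powr_mono2) auto
    also have "\<dots> = S ^ (r - 1)" using Spos hr by (simp add: powr_realpow[symmetric] of_nat_diff)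
    finally show ?thesis using Spos by simp
  qed
  finally show ?thesis using P1 P2 by simp
qed

end
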